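(* For every $m\ge0$, the expected number of internal vertices of a free triangulation of an $(m+2)$-gon is \[ \frac{1}{Z_m}\sum_{n\ge0} n\,\phi_{n,m}\,\alpha^{-n} = \frac{(m+1)(2m+1)}{3}. \]
   Context: $\phi_{n,m}=\frac{2^{n+1}(2m+1)!(2m+3n)!}{m!^2 n!(2m+2n+2)!}$ is the number of rooted type II triangulations (multiple edges allowed, no loops) of a disc with $m+2$ boundary vertices and $n$ internal vertices, with the convention $\phi_{0,0}=1$. Let $\alpha=27/2$ and $Z_m=\sum_n\phi_{n,m}\alpha^{-n}=\frac{(2m)!}{m!(m+2)!}(9/4)^{m+1}$. The free triangulation of an $(m+2)$-gon has law $\mu_m$, which gives each rooted triangulation of the $(m+2)$-gon with $n$ internal vertices weight $\alpha^{-n}/Z_m$. *)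

theory Defs
  imports Complex_Main
begin

text \<open>phi n m: number of rooted type II triangulations of an (m+2)-gon with n internal vertices.\<close>
definition phi :: "nat \<Rightarrow> nat \<Rightarrow> real" where
  "phi n m = (2 ^ (n + 1) * fact (2 * m + 1) * fact (2 * m + 3 * n))
             / (fact m ^ 2 * fact n * fact (2 * m + 2 * n + 2))"

definition alpha :: real where "alpha = 27 / 2"

definition Z :: "nat \<Rightarrow> real" where
  "Z m = (\<Sum>n. phi n m / alpha ^ n)"

definition expected_internal :: "nat \<Rightarrow> real" where
  "expected_internal m = (\<Sum>n. real n * phi n m / alpha ^ n) / Z m"

end

theory Submission
  imports Defs "HOL-Real_Asymp.Real_Asymp"
begin

definition AA :: "nat \<Rightarrow> nat \<Rightarrow> real" where
 "AA r n = (if r = 0 then (if n = 0 then 1 else 0)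
    else real r * fact (3*n + r - 1) / (fact n * fact (2*n + r)))"

lemma fact1: "(fact (n+1) :: real) = (real n + 1) * fact n"
  by (simp add: algebra_simps)
lemma fact2: "(fact (n+2) :: real) = (real n + 1) * (real n + 2) * fact n"
proof -
  have "n+2 = Suc (Suc n)" by simp
  then show ?thesis by (simp only: fact_Suc) (simp add: algebra_simps)
qed
lemma fact3: "(fact (n+3) :: real) = (real n + 1) * (real n + 2) * (real n + 3) * fact n"
proof -
  have "n+3 = Suc (Suc (Suc n))" by simp
  then show ?thesis by (simp only: fact_Suc) (simp add: algebra_simps)
qed

lemma AA_nonneg: "AA r n \<ge> 0"
  by (simp add: AA_def)
lemma AA_0 [simp]: "AA r 0 = 1"
proof (cases r)
  case (Suc r') then show ?thesis by (simp add: AA_def fact_reduce[of "Suc r'"])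
qed (simp add: AA_def)

lemma AA1: "AA 1 x = fact (3*x) / (fact x * fact (2*x+1))"
  by (simp add: AA_def)

lemma AA1_Suc: "AA 1 (Suc x) = AA 1 x * (3*(3*real x+1)*(3*real x+2)) / (2*(real x+1)*(2*real x+3))"
proof -
  have e1: "3 * Suc x = 3*x + 3" "2 * Suc x + 1 = (2*x+1) + 2" by simp_all
  have "AA 1 (Suc x) = fact (3*x+3) / (fact (x+1) * fact ((2*x+1)+2))"
    unfolding AA1 e1 by simp
  also have "\<dots> = (real (3*x) + 1) * (real (3*x) + 2) * (real (3*x) + 3) * fact (3*x) /
      ((real x + 1) * fact x * ((real (2*x+1) + 1) * (real (2*x+1) + 2) * fact (2*x+1)))"
    by (simp only: fact1 fact2 fact3)
  also have "\<dots> = AA 1 x * (3*(3*real x+1)*(3*real x+2)) / (2*(real x+1)*(2*real x+3))"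
    unfolding AA1 by (simp add: divide_simps) (simp add: algebra_simps)
  finally show ?thesis .
qed

lemma AA_rec3: "AA (r+3) n = AA (r+1) (Suc n) - AA r (Suc n)"
proof (cases r)
  case 0
  have e: "3 * Suc n = (3*n+2) + 1" "2 * Suc n + 1 = 2*n+3" by simp_all
  have "AA 1 (Suc n) = fact ((3*n+2)+1) / (fact (n+1) * fact (2*n+3))"
    unfolding AA1 e by simp
  also have "\<dots> = (real (3*n+2) + 1) * fact (3*n+2) / ((real n + 1) * fact n * fact (2*n+3))"
    by (simp only: fact1)
  also have "\<dots> = AA 3 n"
    by (simp add: AA_def divide_simps)
  finally show ?thesis using 0 by (simp add: AA_def)
next
  case (Suc r')
  define a where "a = 3*n+r+2"
  define b where "b = 2*n+r+2"
  have e1: "3*n + (r+3) - 1 = a" "2*n + (r+3) = b + 1" "3 * Suc n + (r+1) - 1 = a + 1"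
     "2 * Suc n + (r+1) = b+1" "3 * Suc n + r - 1 = a" "2 * Suc n + r = b"
    using Suc by (simp_all add: a_def b_def)
  have h1: "AA (r+3) n = real (r+3) * fact a / (fact n * ((real b + 1) * fact b))"
    unfolding AA_def e1 by (simp add: fact1 algebra_simps)
  have h2: "AA (r+1) (Suc n) = real (r+1) * ((real a + 1) * fact a) / ((real n + 1) * fact n * ((real b + 1) * fact b))"
    unfolding AA_def e1 by (simp add: fact1 algebra_simps)
  have h3: "AA r (Suc n) = real r * fact a / ((real n + 1) * fact n * fact b)"
    unfolding AA_def e1 using Suc by (simp add: fact1)
  have h4: "real a = 3 * real n + real r + 2" "real b = 2 * real n + real r + 2"
    by (simp_all add: a_def b_def)
  show ?thesis unfolding h1 h2 h3 h4
    by (simp add: divide_simps) (simp add: algebra_simps)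
qed

definition y0 :: real where "y0 = 4/27"

fun cc :: "nat \<Rightarrow> real" where
  "cc 0 = 1"
| "cc (Suc n) = cc n * (2*real n+1)/(2*real n+2)"

lemma cc_pos: "cc n > 0"
  by (induction n) auto

lemma cc_dec: "cc (Suc n) \<le> cc n"
proof -
  have "(2*real n+1)/(2*real n+2) \<le> 1" by simp
  then have "cc n * ((2*real n+1)/(2*real n+2)) \<le> cc n * 1"
    using cc_pos[of n] by (intro mult_left_mono) auto
  then show ?thesis by simp
qed

lemma AA1_bound: "AA 1 n * y0 ^ n \<le> cc n / (real n + 1)"
proof (induction n)
  case 0 then show ?case by simp
next
  case (Suc n)
  define \<rho> where "\<rho> = (3*(3*real n+1)*(3*real n+2)) / (2*(real n+1)*(2*real n+3)) * y0"
  have r: "\<rho> \<le> (2*real n+1)/(2*real n+4)"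
    unfolding \<rho>_def y0_def by (simp add: divide_simps) (simp add: algebra_simps)
  have r0: "\<rho> \<ge> 0" unfolding \<rho>_def y0_def by simp
  have "AA 1 (Suc n) * y0 ^ Suc n = (AA 1 n * y0 ^ n) * \<rho>"
    unfolding AA1_Suc \<rho>_def by (simp add: algebra_simps)
  also have "\<dots> \<le> cc n / (real n + 1) * ((2*real n+1)/(2*real n+4))"
    using Suc.IH r r0 AA_nonneg[of 1 n] cc_pos[of n]
    by (intro mult_mono) (auto simp: y0_def)
  also have "\<dots> = cc (Suc n) / (real (Suc n) + 1)"
    by (simp add: divide_simps) (simp add: algebra_simps)
  finally show ?case .
qed

lemma cc_conv: "\<exists>L. cc \<longlonglongrightarrow> L"
proof -
  have "decseq cc" using cc_dec by (simp add: decseq_SucI)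
  moreover have "\<forall>i. 0 \<le> cc i" using cc_pos less_imp_le by blast
  ultimately obtain L where "cc \<longlonglongrightarrow> L" by (rule decseq_convergent)
  then show ?thesis by blast
qed

lemma summable_AA1: "summable (\<lambda>n. AA 1 n * y0 ^ n)"
proof -
  obtain L where L: "cc \<longlonglongrightarrow> L" using cc_conv by blast
  have s: "summable (\<lambda>n. 2 * (cc n - cc (Suc n)))"
    by (intro summable_mult telescope_summable'[OF L])
  show ?thesis
  proof (rule summable_comparison_test[OF _ s], intro exI allI impI)
    fix n :: nat
    have "cc n / (real n + 1) = 2 * (cc n - cc (Suc n))"
      by (simp add: divide_simps) (simp add: algebra_simps)
    then show "norm (AA 1 n * y0 ^ n) \<le> 2 * (cc n - cc (Suc n))"
      using AA1_bound[of n] AA_nonneg[of 1 n] by (simp add: y0_def)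
  qed
qed

lemma AA2_le: "AA 2 n \<le> AA 1 (Suc n)"
proof -
  have e: "3*n + 2 - 1 = 3*n+1" "2*n+2 = (2*n+1)+1" "3 * Suc n = (3*n+1) + 2" "2 * Suc n + 1 = (2*n+1) + 2" by simp_all
  have h1: "AA 2 n = 2 * fact (3*n+1) / (fact n * ((real (2*n+1) + 1) * fact (2*n+1)))"
    unfolding AA_def e by (simp only: fact1) simp
  have h2: "AA 1 (Suc n) = (real (3*n+1) + 1) * (real (3*n+1) + 2) * fact (3*n+1) /
     ((real n + 1) * fact n * ((real (2*n+1) + 1) * (real (2*n+1) + 2) * fact (2*n+1)))"
    unfolding AA1 e by (simp only: fact1 fact2) (simp add: algebra_simps)
  show ?thesis unfolding h1 h2
    by (simp add: divide_simps) (simp add: algebra_simps)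
qed

lemma summable_shift: "summable (f::nat\<Rightarrow>real) \<Longrightarrow> summable (\<lambda>n. f (Suc n))"
  using summable_Suc_iff[of f] by blast

lemma summable_AA: "summable (\<lambda>n. AA r n * y0 ^ n)"
proof (induction r rule: less_induct)
  case (less r)
  have y0p: "y0 > 0" by (simp add: y0_def)
  show ?case
  proof (cases "r < 3")
    case True
    then consider "r = 0" | "r = 1" | "r = 2" by linarith
    then show ?thesis
    proof cases
      case 1
      have "(\<lambda>n. AA r n * y0 ^ n) = (\<lambda>n. if n \<in> {0} then 1 else 0)"
        using 1 by (auto simp: AA_def)
      then show ?thesis by simp
    next
      case 2 then show ?thesis using summable_AA1 by simp
    next
      case 3
      have s: "summable (\<lambda>n. (1/y0) * (AA 1 (Suc n) * y0 ^ Suc n))"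
        by (intro summable_mult) (rule summable_shift[OF summable_AA1])
      show ?thesis
      proof (rule summable_comparison_test[OF _ s], intro exI allI impI)
        fix n :: nat
        have "AA 2 n * y0 ^ n \<le> AA 1 (Suc n) * y0 ^ n"
          using AA2_le[of n] y0p by (intro mult_right_mono) auto
        also have "\<dots> = (1/y0) * (AA 1 (Suc n) * y0 ^ Suc n)" using y0p by simp
        finally show "norm (AA r n * y0 ^ n) \<le> (1/y0) * (AA 1 (Suc n) * y0 ^ Suc n)"
          using 3 AA_nonneg[of 2 n] y0p by simp
      qed
    qed
  next
    case False
    then obtain q where q: "r = q + 3" by (metis add.commute le_Suc_ex not_less)
    have IH: "summable (\<lambda>n. AA (q+1) n * y0 ^ n)" using less q by simp
    have s: "summable (\<lambda>n. (1/y0) * (AA (q+1) (Suc n) * y0 ^ Suc n))"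
      by (intro summable_mult) (rule summable_shift[OF IH])
    show ?thesis
    proof (rule summable_comparison_test[OF _ s], intro exI allI impI)
      fix n :: nat
      have "AA (q+3) n * y0 ^ n \<le> AA (q+1) (Suc n) * y0 ^ n"
        using AA_rec3[of q n] AA_nonneg[of q "Suc n"] y0p by (intro mult_right_mono) auto
      also have "\<dots> = (1/y0) * (AA (q+1) (Suc n) * y0 ^ Suc n)" using y0p by simp
      finally show "norm (AA r n * y0 ^ n) \<le> (1/y0) * (AA (q+1) (Suc n) * y0 ^ Suc n)"
        using q AA_nonneg[of "q+3" n] y0p by simp
    qed
  qed
qed

definition ss :: "nat \<Rightarrow> real" where "ss r = (\<Sum>n. AA r n * y0 ^ n)"

lemma ss_split: "ss r = 1 + (\<Sum>n. AA r (Suc n) * y0 ^ Suc n)"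
  using suminf_split_head[OF summable_AA[of r]] unfolding ss_def by simp

lemma ss_ge1: "ss r \<ge> 1"
proof -
  have "summable (\<lambda>n. AA r (Suc n) * y0 ^ Suc n)"
    by (rule summable_shift[OF summable_AA])
  then have "(\<Sum>n. AA r (Suc n) * y0 ^ Suc n) \<ge> 0"
    by (rule suminf_nonneg) (simp add: AA_nonneg y0_def)
  then show ?thesis using ss_split[of r] by simp
qed

lemma ss_rec: "y0 * ss (r+3) = ss (r+1) - ss r"
proof -
  have S: "summable (\<lambda>n. AA k (Suc n) * y0 ^ Suc n)" for k
    by (rule summable_shift[OF summable_AA])
  have "ss (r+1) - ss r = (\<Sum>n. AA (r+1) (Suc n) * y0 ^ Suc n) - (\<Sum>n. AA r (Suc n) * y0 ^ Suc n)"
    using ss_split[of r] ss_split[of "r+1"] by simp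
  also have "\<dots> = (\<Sum>n. AA (r+1) (Suc n) * y0 ^ Suc n - AA r (Suc n) * y0 ^ Suc n)"
    by (rule suminf_diff[OF S S])
  also have "\<dots> = (\<Sum>n. y0 * (AA (r+3) n * y0 ^ n))"
    by (rule arg_cong[where f=suminf]) (auto simp: AA_rec3 algebra_simps)
  also have "\<dots> = y0 * ss (r+3)"
    unfolding ss_def by (rule suminf_mult[OF summable_AA])
  finally show ?thesis by simp
qed

lemma ss0: "ss 0 = 1"
  using ss_split[of 0] by (simp add: AA_def)

lemma ss2_lin: "ss 2 = 3 * ss 1 - 9/4"
proof -
  define x where "x = ss 1"
  define L where "L = ss 2 - 3 * x + 9/4"
  define c where "c = 4 * L / 81"
  define a where "a = 1 - c"
  define b where "b = 2*x/3 - 1 + 3*c"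
  define f where "f = (\<lambda>r::nat. (a + b * real r) * (3/2)^r + c * (-3)^r)"
  have frec: "f (r+3) = 27/4 * (f (r+1) - f r)" for r
    unfolding f_def by (simp add: power_add power3_eq_cube field_simps)
  have cf: "ss r = f r" for r
  proof (induction r rule: less_induct)
    case (less r)
    show ?case
    proof (cases "r < 3")
      case True
      then consider "r = 0" | "r = 1" | "r = 2" by linarith
      then show ?thesis
      proof cases
        case 1 then show ?thesis unfolding f_def a_def using ss0 by simp
      next
        case 2 then show ?thesis unfolding f_def a_def b_def x_def by (simp add: algebra_simps)
      next
        case 3 then show ?thesis unfolding f_def a_def b_def x_def c_def L_def
          by (simp add: power2_eq_square field_simps)
      qed
    next
      case False
      then obtain q where q: "r = q + 3" by (metis add.commute le_Suc_ex not_less)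
      have "ss (q+3) = 27/4 * (ss (q+1) - ss q)"
        using ss_rec[of q] by (simp add: y0_def field_simps)
      also have "\<dots> = 27/4 * (f (q+1) - f q)" using less q by simp
      also have "\<dots> = f (q+3)" using frec[of q] by simp
      finally show ?thesis using q by simp
    qed
  qed
  have pos: "0 \<le> (a + b * real r) * (1/2)^r + c * (-1)^r" for r
  proof -
    have "0 \<le> ss r / 3^r" using ss_ge1[of r] by simp
    also have "ss r / 3^r = (a + b * real r) * (1/2)^r + c * (-1)^r"
      unfolding cf f_def by (simp add: field_simps power_mult_distrib[symmetric])
    finally show ?thesis .
  qed
  have l1: "(\<lambda>k::nat. (a + b * real (2*k)) * (1/2)^(2*k) + c) \<longlonglongrightarrow> 0 + c"
    by (intro tendsto_add tendsto_const) real_asymp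
  have l2: "(\<lambda>k::nat. (a + b * real (2*k+1)) * (1/2)^(2*k+1) - c) \<longlonglongrightarrow> 0 - c"
    by (intro tendsto_diff tendsto_const) real_asymp
  have "0 \<le> 0 + c"
  proof (rule LIMSEQ_le_const[OF l1], intro exI allI impI)
    fix k :: nat
    have "(-1::real)^(2*k) = 1" by (simp add: power_mult)
    then show "0 \<le> (a + b * real (2*k)) * (1/2)^(2*k) + c" using pos[of "2*k"] by simp
  qed
  moreover have "0 \<le> 0 - c"
  proof (rule LIMSEQ_le_const[OF l2], intro exI allI impI)
    fix k :: nat
    have "(-1::real)^(2*k+1) = -1" by (simp add: power_mult)
    then show "0 \<le> (a + b * real (2*k+1)) * (1/2)^(2*k+1) - c" using pos[of "2*k+1"] by simp
  qed
  ultimately have "c = 0" by simp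
  then show ?thesis unfolding c_def L_def x_def by simp
qed

definition RR :: "nat \<Rightarrow> nat \<Rightarrow> real" where
  "RR n k = real k * (8 * real k ^ 2 - 12 * real k * (real n + 1) - 6 * real n - 8) / (real n + 1)"

definition rho :: "nat \<Rightarrow> real" where
  "rho x = (3*(3*real x+1)*(3*real x+2)) / (2*(real x+1)*(2*real x+3))"

definition GG :: "nat \<Rightarrow> nat \<Rightarrow> real" where
  "GG n k = RR n k * AA 1 k * AA 1 (n + 1 - k)"

lemma AA1_pos: "AA 1 n > 0"
  unfolding AA1 by simp

lemma AA1_Suc': "AA 1 (Suc x) = AA 1 x * rho x"
  unfolding AA1_Suc rho_def by simp

lemma cert_poly:
  assumes "n = k + j"
  shows "- 3 * (3*real n+2) * (3*real n+4) + 2 * (2*real n+3) * (real n+2) * rho j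
     = RR n (Suc k) * rho k - RR n k * rho j"
proof -
  have rn: "real n = real k + real j" using assms by simp
  have p: "real j + 1 \<noteq> 0" "2 * real j + 3 \<noteq> 0" "real k + 1 \<noteq> 0" "2 * real k + 3 \<noteq> 0"
     "real k + real j + 1 \<noteq> 0" by (simp_all add: add_nonneg_pos)
  show ?thesis unfolding RR_def rho_def rn using p
    by (simp add: divide_simps) (simp add: algebra_simps power2_eq_square)
qed

lemma cert_term:
  assumes "k \<le> n"
  shows "- 3 * (3*real n+2) * (3*real n+4) * (AA 1 k * AA 1 (n - k))
         + 2 * (2*real n+3) * (real n+2) * (AA 1 k * AA 1 (Suc n - k))
       = GG n (Suc k) - GG n k"
proof -
  obtain j where j: "n = k + j" using assms le_Suc_ex by blast
  have e: "n - k = j" "n + 1 - k = Suc j" "n + 1 - Suc k = j" "Suc n - k = Suc j" using j by simp_all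
  have "GG n (Suc k) - GG n k = AA 1 k * AA 1 j * (RR n (Suc k) * rho k - RR n k * rho j)"
    unfolding GG_def e AA1_Suc' by (simp add: algebra_simps)
  also have "\<dots> = AA 1 k * AA 1 j * (- 3 * (3*real n+2) * (3*real n+4) + 2 * (2*real n+3) * (real n+2) * rho j)"
    using cert_poly[OF j] by simp
  also have "\<dots> = - 3 * (3*real n+2) * (3*real n+4) * (AA 1 k * AA 1 (n - k))
         + 2 * (2*real n+3) * (real n+2) * (AA 1 k * AA 1 (Suc n - k))"
    unfolding e AA1_Suc' by (simp add: algebra_simps)
  finally show ?thesis by simp
qed

definition PP :: "nat \<Rightarrow> real" where "PP n = (\<Sum>k\<le>n. AA 1 k * AA 1 (n - k))"

lemma conv_rec: "- 3 * (3*real n+2) * (3*real n+4) * PP n + 2 * (2*real n+3) * (real n+2) * PP (Suc n) = 0"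
proof -
  define c0 where "c0 = - 3 * (3*real n+2) * (3*real n+4)"
  define c1 where "c1 = 2 * (2*real n+3) * (real n+2)"
  have tel: "(\<Sum>k\<le>n. GG n (Suc k) - GG n k) = GG n (Suc n) - GG n 0"
    using sum_lessThan_telescope[of "GG n" "Suc n"] by (simp add: lessThan_Suc_atMost)
  have "(\<Sum>k\<le>n. c0 * (AA 1 k * AA 1 (n - k)) + c1 * (AA 1 k * AA 1 (Suc n - k)))
        = (\<Sum>k\<le>n. GG n (Suc k) - GG n k)"
  proof (rule sum.cong)
    fix k assume "k \<in> {..n}"
    then show "c0 * (AA 1 k * AA 1 (n - k)) + c1 * (AA 1 k * AA 1 (Suc n - k)) = GG n (Suc k) - GG n k"
      unfolding c0_def c1_def by (intro cert_term) simp
  qed simp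
  also have "\<dots> = - c1 * AA 1 (Suc n)"
    unfolding tel by (simp add: GG_def RR_def c1_def divide_simps) (simp add: algebra_simps power2_eq_square)
  finally have A: "c0 * PP n + c1 * (\<Sum>k\<le>n. AA 1 k * AA 1 (Suc n - k)) = - c1 * AA 1 (Suc n)"
    by (simp add: PP_def sum.distrib sum_distrib_left)
  have B: "PP (Suc n) = (\<Sum>k\<le>n. AA 1 k * AA 1 (Suc n - k)) + AA 1 (Suc n)"
    unfolding PP_def by simp
  show ?thesis using A B unfolding c0_def[symmetric] c1_def[symmetric] by (simp add: algebra_simps)
qed

lemma AA2_rec: "- 3 * (3*real n+2) * (3*real n+4) * AA 2 n + 2 * (2*real n+3) * (real n+2) * AA 2 (Suc n) = 0"
proof -
  have e: "3*n + 2 - 1 = 3*n+1" "3 * Suc n + 2 - 1 = (3*n+1) + 3" "2 * Suc n + 2 = (2*n+2) + 2" by simp_all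
  have h1: "AA 2 n = 2 * fact (3*n+1) / (fact n * fact (2*n+2))"
    unfolding AA_def e by simp
  have h2: "AA 2 (Suc n) = 2 * ((real (3*n+1) + 1) * (real (3*n+1) + 2) * (real (3*n+1) + 3) * fact (3*n+1)) /
      (((real n + 1) * fact n) * ((real (2*n+2) + 1) * (real (2*n+2) + 2) * fact (2*n+2)))"
    unfolding AA_def e by (simp only: fact3 fact2 fact_Suc) (simp add: algebra_simps)
  show ?thesis unfolding h1 h2
    by (simp add: divide_simps) (simp add: algebra_simps)
qed

lemma conv_AA1: "PP n = AA 2 n"
proof (induction n)
  case 0 then show ?case by (simp add: PP_def)
next
  case (Suc n)
  have c: "2 * (2*real n+3) * (real n+2) \<noteq> 0" by simp
  have "2 * (2*real n+3) * (real n+2) * (PP (Suc n) - AA 2 (Suc n)) = 0"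
    using conv_rec[of n] AA2_rec[of n] Suc.IH by (simp add: algebra_simps)
  then show ?case using c by simp
qed

lemma ss2_sq: "ss 2 = ss 1 ^ 2"
proof -
  have n: "summable (\<lambda>k. norm (AA 1 k * y0 ^ k))"
    using summable_AA[of 1] by (simp add: AA_nonneg y0_def)
  have "ss 1 * ss 1 = (\<Sum>k. \<Sum>i\<le>k. (AA 1 i * y0 ^ i) * (AA 1 (k - i) * y0 ^ (k - i)))"
    unfolding ss_def by (rule Cauchy_product[OF n n])
  also have "\<dots> = (\<Sum>k. AA 2 k * y0 ^ k)"
  proof (rule arg_cong[where f=suminf], rule ext)
    fix k
    have "(\<Sum>i\<le>k. (AA 1 i * y0 ^ i) * (AA 1 (k - i) * y0 ^ (k - i))) = (\<Sum>i\<le>k. (AA 1 i * AA 1 (k - i)) * y0 ^ k)"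
    proof (rule sum.cong)
      fix i assume "i \<in> {..k}"
      then have "y0 ^ i * y0 ^ (k - i) = y0 ^ k" by (simp add: power_add[symmetric])
      then show "(AA 1 i * y0 ^ i) * (AA 1 (k - i) * y0 ^ (k - i)) = (AA 1 i * AA 1 (k - i)) * y0 ^ k"
        by (metis mult.assoc mult.left_commute)
    qed simp
    also have "\<dots> = PP k * y0 ^ k" unfolding PP_def by (simp add: sum_distrib_right)
    finally show "(\<Sum>i\<le>k. (AA 1 i * y0 ^ i) * (AA 1 (k - i) * y0 ^ (k - i))) = AA 2 k * y0 ^ k"
      by (simp add: conv_AA1)
  qed
  finally show ?thesis unfolding ss_def by (simp add: power2_eq_square)
qed

lemma ss1: "ss 1 = 3/2"
proof -
  define x where "x = ss 1"
  have h1: "ss 2 = x^2" "ss 2 = 3 * x - 9/4" using ss2_sq ss2_lin x_def by simp_all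
  have "(x - 3/2)^2 = x^2 - 3*x + 9/4" by (simp add: power2_eq_square algebra_simps)
  also have "\<dots> = 0" using h1 by linarith
  finally show ?thesis using x_def by simp
qed

lemma ss_val: "ss r = (3/2)^r"
proof (induction r rule: less_induct)
  case (less r)
  show ?case
  proof (cases "r < 3")
    case True
    then consider "r = 0" | "r = 1" | "r = 2" by linarith
    then show ?thesis
    proof cases
      case 1 then show ?thesis using ss0 by simp
    next
      case 2 then show ?thesis using ss1 by simp
    next
      case 3
      have q: "ss 1 = 3/2" using ss1 by simp
      show ?thesis unfolding 3 ss2_sq q by (simp add: power2_eq_square)
    qed
  next
    case False
    then obtain q where q: "r = q + 3" by (metis add.commute le_Suc_ex not_less)
    have "ss (q+3) = 27/4 * (ss (q+1) - ss q)"
      using ss_rec[of q] by (simp add: y0_def field_simps)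
    also have "\<dots> = 27/4 * ((3/2)^(q+1) - (3/2)^q)" using less q by simp
    also have "\<dots> = (3/2)^(q+3)" by (simp add: power_add power3_eq_cube field_simps)
    finally show ?thesis using q by simp
  qed
qed

lemma I4:
  "AA (2*m+1) (Suc N) / (real (Suc N) + real m + 1)
     = AA (2*m+2) (Suc N) / (real m + 1) - 3 * AA (2*m+4) N / (real m + 2)"
proof -
  define a where "a = 3*N+2*m+3"
  define b where "b = 2*N+2*m+3"
  have e: "3 * Suc N + (2*m+1) - 1 = a" "2 * Suc N + (2*m+1) = b"
     "3 * Suc N + (2*m+2) - 1 = a+1" "2 * Suc N + (2*m+2) = b+1"
     "3 * N + (2*m+4) - 1 = a" "2 * N + (2*m+4) = b+1"
    by (simp_all add: a_def b_def)
  have h1: "AA (2*m+1) (Suc N) = real (2*m+1) * fact a / ((real N + 1) * fact N * fact b)"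
    unfolding AA_def e by (simp add: algebra_simps)
  have h2: "AA (2*m+2) (Suc N) = real (2*m+2) * ((real a + 1) * fact a) / ((real N + 1) * fact N * ((real b + 1) * fact b))"
    unfolding AA_def e by (simp add: algebra_simps)
  have h3: "AA (2*m+4) N = real (2*m+4) * fact a / (fact N * ((real b + 1) * fact b))"
    unfolding AA_def e by (simp only: fact1) simp
  have h4: "real a = 3 * real N + 2 * real m + 3" "real b = 2 * real N + 2 * real m + 3"
    by (simp_all add: a_def b_def)
  show ?thesis unfolding h1 h2 h3 h4
    by (simp add: divide_simps) (simp add: algebra_simps)
qed

lemma phi_eq: "phi n m / alpha ^ n = (fact (2*m) / (fact m)^2) * (y0 ^ n * AA (2*m+1) n / (real n + real m + 1))"
proof -
  have pw: "(2::real)^(n+1) / (27/2)^n = 2 * y0^n"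
    unfolding y0_def by (simp add: power_divide field_simps power_mult_distrib[symmetric])
  have f1: "(fact (2*m+1) :: real) = (2 * real m + 1) * fact (2*m)" using fact1[of "2*m"] by simp
  have f2: "(fact (2*m+2*n+2) :: real) = (2 * real n + 2 * real m + 2) * fact (2*n+2*m+1)"
    using fact1[of "2*n+2*m+1"] by (simp add: algebra_simps)
  have f3: "2*m+3*n = 3*n+(2*m+1)-1" by simp
  have A: "AA (2*m+1) n = (2 * real m + 1) * fact (3*n+(2*m+1)-1) / (fact n * fact (2*n+(2*m+1)))"
    by (simp add: AA_def)
  have "phi n m / alpha ^ n = ((2::real)^(n+1) / (27/2)^n) * (fact (2*m+1) * fact (2*m+3*n) / ((fact m)^2 * fact n * fact (2*m+2*n+2)))"
    unfolding phi_def alpha_def by (simp add: mult_ac)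
  also have "\<dots> = 2 * y0^n * ((2 * real m + 1) * fact (2*m) * fact (3*n+(2*m+1)-1) / ((fact m)^2 * fact n * ((2 * real n + 2 * real m + 2) * fact (2*n+2*m+1))))"
    unfolding pw f1 f2 f3 by simp
  also have "\<dots> = (fact (2*m) / (fact m)^2) * (y0 ^ n * AA (2*m+1) n / (real n + real m + 1))"
    unfolding A by (simp add: divide_simps algebra_simps)
  finally show ?thesis .
qed

lemma pw32: "(3/2::real)^(2*m+k) = (9/4)^m * (3/2)^k"
  by (simp add: power_add power_mult power2_eq_square)

lemma alg1:
  fixes P x :: real assumes "x \<ge> 0"
  shows "((3/2)^2 * P) / (x + 1) - 3 * (4/27) * ((3/2)^4 * P) / (x + 2) = P * (9/4) / ((x + 1) * (x + 2))"
  using assms by (simp add: divide_simps) (simp add: algebra_simps)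

lemma alg2:
  fixes P x :: real assumes "x \<ge> 0" "P > 0"
  shows "(((3/2)^1 * P) - (x + 1) * (P * (9/4) / ((x + 1) * (x + 2)))) / (P * (9/4) / ((x + 1) * (x + 2)))
     = (x + 1) * (2 * x + 1) / 3"
  using assms by (simp add: divide_simps) (simp add: algebra_simps)

theorem proposition5p1:
  fixes m :: nat
  shows "summable (\<lambda>n. real n * phi n m / alpha ^ n) \<and>
         expected_internal m = real ((m + 1) * (2 * m + 1)) / 3"
proof -
  define C where "C = (fact (2*m) / (fact m)^2 :: real)"
  have Cpos: "C > 0" unfolding C_def by simp
  define u where "u = (\<lambda>n. y0 ^ n * AA (2*m+1) n / (real n + real m + 1))"
  have y0p: "y0 > 0" by (simp add: y0_def)
  have su: "summable u"
  proof (rule summable_comparison_test[OF _ summable_AA[of "2*m+1"]], intro exI allI impI)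
    fix n :: nat
    have "y0 ^ n * AA (2*m+1) n / (real n + real m + 1) \<le> y0 ^ n * AA (2*m+1) n / 1"
      using AA_nonneg[of "2*m+1" n] y0p by (intro divide_left_mono) auto
    then show "norm (u n) \<le> AA (2*m+1) n * y0 ^ n"
      unfolding u_def using AA_nonneg[of "2*m+1" n] y0p by (simp add: mult.commute)
  qed
  have S: "summable (\<lambda>n. AA k (Suc n) * y0 ^ Suc n)" for k
    by (rule summable_shift[OF summable_AA])
  have uS: "u (Suc n) = (1/(real m + 1)) * (AA (2*m+2) (Suc n) * y0 ^ Suc n) - (3 * y0 / (real m + 2)) * (AA (2*m+4) n * y0 ^ n)" for n
  proof -
    have "u (Suc n) = y0 ^ Suc n * (AA (2*m+1) (Suc n) / (real (Suc n) + real m + 1))"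
      unfolding u_def by simp
    also have "\<dots> = y0 ^ Suc n * (AA (2*m+2) (Suc n) / (real m + 1) - 3 * AA (2*m+4) n / (real m + 2))"
      by (simp only: I4)
    finally show ?thesis by (simp add: algebra_simps)
  qed
  have U: "suminf u = ss (2*m+2) / (real m + 1) - 3 * y0 * ss (2*m+4) / (real m + 2)"
  proof -
    have "suminf u = u 0 + (\<Sum>n. u (Suc n))" using suminf_split_head[OF su] by simp
    also have "(\<Sum>n. u (Suc n)) = (\<Sum>n. (1/(real m + 1)) * (AA (2*m+2) (Suc n) * y0 ^ Suc n))
        - (\<Sum>n. (3 * y0 / (real m + 2)) * (AA (2*m+4) n * y0 ^ n))"
      unfolding uS by (intro suminf_diff[symmetric] summable_mult S summable_AA)
    also have "\<dots> = (1/(real m + 1)) * (ss (2*m+2) - 1) - (3 * y0 / (real m + 2)) * ss (2*m+4)"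
    proof -
      have e1: "(\<Sum>n. (1/(real m + 1)) * (AA (2*m+2) (Suc n) * y0 ^ Suc n)) = (1/(real m + 1)) * (\<Sum>n. AA (2*m+2) (Suc n) * y0 ^ Suc n)"
        by (rule suminf_mult[OF S])
      have e2: "(\<Sum>n. (3 * y0 / (real m + 2)) * (AA (2*m+4) n * y0 ^ n)) = (3 * y0 / (real m + 2)) * ss (2*m+4)"
        unfolding ss_def by (rule suminf_mult[OF summable_AA])
      have e3: "(\<Sum>n. AA (2*m+2) (Suc n) * y0 ^ Suc n) = ss (2*m+2) - 1"
        using ss_split[of "2*m+2"] by linarith
      show ?thesis by (simp only: e1 e2 e3)
    qed
    finally have "suminf u = u 0 + ((1/(real m + 1)) * (ss (2*m+2) - 1) - (3 * y0 / (real m + 2)) * ss (2*m+4))" .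
    moreover have "u 0 = 1/(real m + 1)" by (simp add: u_def)
    moreover have "1/(real m+1) + (1/(real m + 1)) * (X - 1) - (3 * y0 / (real m + 2)) * Y = X/(real m+1) - 3*y0*Y/(real m+2)" for X Y
      by (simp add: right_diff_distrib)
    ultimately show ?thesis by simp
  qed
  have Uv: "suminf u = (9/4)^m * (9/4) / ((real m + 1) * (real m + 2))"
  proof -
    have "suminf u = ((3/2)^2 * (9/4)^m) / (real m + 1) - 3 * (4/27) * ((3/2)^4 * (9/4)^m) / (real m + 2)"
      unfolding U ss_val y0_def pw32 by (simp add: mult.commute)
    also have "\<dots> = (9/4)^m * (9/4) / ((real m + 1) * (real m + 2))"
      by (rule alg1) simp
    finally show ?thesis .
  qed
  have Z: "Z m = C * suminf u"
    unfolding Z_def phi_eq C_def u_def by (rule suminf_mult[OF su[unfolded u_def]])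
  have eqn: "(\<lambda>n. real n * phi n m / alpha ^ n) = (\<lambda>n. C * (AA (2*m+1) n * y0 ^ n - (real m + 1) * u n))"
  proof
    fix n
    have "real n * phi n m / alpha ^ n = real n * (phi n m / alpha ^ n)" by simp
    also have "\<dots> = C * (AA (2*m+1) n * y0 ^ n - (real m + 1) * u n)"
      unfolding phi_eq C_def u_def by (simp add: divide_simps) (simp add: algebra_simps)
    finally show "real n * phi n m / alpha ^ n = C * (AA (2*m+1) n * y0 ^ n - (real m + 1) * u n)" .
  qed
  have s2: "summable (\<lambda>n. AA (2*m+1) n * y0 ^ n - (real m + 1) * u n)"
    by (intro summable_diff summable_mult summable_AA su)
  have sY: "summable (\<lambda>n. real n * phi n m / alpha ^ n)"
    unfolding eqn by (intro summable_mult s2)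
  have Y: "(\<Sum>n. real n * phi n m / alpha ^ n) = C * (ss (2*m+1) - (real m + 1) * suminf u)"
    unfolding eqn suminf_mult[OF s2] ss_def
    by (simp add: suminf_diff[OF summable_AA summable_mult[OF su], symmetric] suminf_mult[OF su])
  have "expected_internal m = (ss (2*m+1) - (real m + 1) * suminf u) / suminf u"
    unfolding expected_internal_def Y Z using Cpos by simp
  also have "\<dots> = real ((m + 1) * (2 * m + 1)) / 3"
  proof -
    have h: "ss (2*m+1) = (3/2)^1 * (9/4)^m" unfolding ss_val pw32 by simp
    have "(ss (2*m+1) - (real m + 1) * suminf u) / suminf u = (real m + 1) * (2 * real m + 1) / 3"
      unfolding Uv h by (intro alg2) auto
    moreover have "(real m + 1) * (2 * real m + 1) / 3 = real ((m + 1) * (2 * m + 1)) / 3"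
      by (simp add: algebra_simps)
    ultimately show ?thesis by simp
  qed
  finally show ?thesis using sY by simp
qed

end
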